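(* Consider any sequences generated by Algorithm 3 with parameters satisfying $\theta\le\left[\sigma\left(\frac4\mu+\nu\right)\right]^{-1}$, $\lambda\le\left[\frac{4\sigma\lambda_{\max}(\mathbf{W})}{\mu}\right]^{-1}$, $\beta\le\min\{\frac1\mu,\frac\nu3\}$, $\gamma\le\lambda_{\min}^+(\mathbf{W})\beta$. Let $\|(y,z)\|^2_{\mathbf{M}} := \frac1\theta\|y\|^2 + \frac1\lambda\|z\|^2_{\mathbf{W}^\dagger}$ for $y\in\mathbb{R}^{nd}$, $z\in\mathrm{range}(\mathbf{W})$. Then for every $k\ge0$, \[ \|(y^{k+1}-y^*,z^{k+1}-z^* )\|^2_{\mathbf{M}} \le \|(y^k-y^*,z^k-z^* )\|^2_{\mathbf{M}} - (\beta-2\nu)\|y^{k+1}-y^*\|^2 - \gamma\|z^{k+1}-z^*\|^2_{\mathbf{W}^\dagger} + \frac{2(1-\sigma)}\sigma\mathrm{D}_h\big((y_f^k,z_f^k),(y^*,z^* )\big) - \frac2\sigma\mathrm{D}_h\big((y_f^{k+1},z_f^{k+1}),(y^*,z^* )\big) - 2\langle x^{k+1}-x^*,y^{k+1}-y^*\rangle. \]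
   Context: $F:\mathbb{R}^{nd}\to\mathbb{R}$ is differentiable, $\mu$-strongly convex and $L$-smooth, $0<\mu\le L$. $\mathbf{W}$ is a symmetric positive semidefinite $nd\times nd$ matrix whose kernel is the consensus space $\{(x_1,\dots,x_n)\in(\mathbb{R}^d)^n:x_1=\dots=x_n\}$, with largest eigenvalue $\lambda_{\max}(\mathbf{W})$ and smallest positive eigenvalue $\lambda_{\min}^+(\mathbf{W})$; $\mathbf{W}^\dagger$ is the inverse of $\mathbf{W}$ restricted to $\mathrm{range}(\mathbf{W})$ and $\|z\|^2_{\mathbf{W}^\dagger}:=\langle\mathbf{W}^\dagger z,z\rangle$. $x^*$ is the unique minimizer of $F$ over $\ker(\mathbf{W})$; $y^*:=\nabla F(x^* )-\frac\mu2x^*$, $z^*:=-\nabla F(x^* )\in\mathrm{range}(\mathbf{W})$. $r(x):=F(x)-\frac\mu4\|x\|^2$, $h(y,z):=\frac1\mu\|y+z\|^2+\frac\nu2\|y\|^2$ (so $\nabla_yh(y,z)=\frac2\mu(y+z)+\nu y$, $\nabla_zh(y,z)=\frac2\mu(y+z)$). $\mathrm{D}_h(u,v):=h(u)-h(v)-\langle\nabla h(v),u-v\rangle$. Algorithm 3: given $x^0,y^0\in\mathbb{R}^{nd}$, $z^0\in\mathrm{range}(\mathbf{W})$, parameters $\eta,\theta,\lambda,\alpha,\beta,\gamma,\nu>0$, $\tau,\sigma\in(0,1)$, set $x_f^0=x^0$, $y_f^0=y^0$, $z_f^0=z^0$, and for $k\ge0$: $x_g^k=\tau x^k+(1-\tau)x_f^k$,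 $y_g^k=\sigma y^k+(1-\sigma)y_f^k$, $z_g^k=\sigma z^k+(1-\sigma)z_f^k$; $(x^{k+1},y^{k+1})$ satisfies $x^{k+1} = x^k + \eta\alpha(x_g^k-x^{k+1}) - \eta\nabla r(x_g^k) + \eta y^{k+1}$ and $y^{k+1} = y^k + \theta\beta(y_g^k - y^{k+1}) - \theta\nabla_y h(y_g^k,z_g^k) + \theta\nu y^{k+1} - \theta x^{k+1}$; $z^{k+1} = z^k + \lambda\gamma(z_g^k - z^{k+1}) - \lambda\mathbf{W}\nabla_z h(y_g^k,z_g^k)$; $x_f^{k+1}=x_g^k+\frac{2\tau}{2-\tau}(x^{k+1}-x^k)$, $y_f^{k+1}=y_g^k+\sigma(y^{k+1}-y^k)$, $z_f^{k+1}=z_g^k+\sigma(z^{k+1}-z^k)$. *)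

theory Defs
  imports "HOL-Analysis.Analysis"
begin

text \<open>Vectors of R^{nd} are represented as elements of (R^d)^n, i.e. type real^'d^'n.
  The Euclidean inner product on this type is the standard one on R^{nd}.\<close>

definition mu_strongly_convex :: "real \<Rightarrow> ('a::real_inner \<Rightarrow> real) \<Rightarrow> bool" where
  "mu_strongly_convex \<mu> F \<longleftrightarrow> convex_on UNIV (\<lambda>x. F x - \<mu> / 2 * (norm x)\<^sup>2)"

definition L_smooth :: "real \<Rightarrow> ('a::real_inner \<Rightarrow> 'a) \<Rightarrow> bool" where
  "L_smooth L gF \<longleftrightarrow> (\<forall>x y. norm (gF x - gF y) \<le> L * norm (x - y))"

definition consensus_space :: "(real^'d^'n) set" where
  "consensus_space = {x. \<forall>i j. x $ i = x $ j}"

definition eigenvalues_of :: "('a::real_vector \<Rightarrow> 'a) \<Rightarrow> real set" where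
  "eigenvalues_of W = {l. \<exists>v. v \<noteq> 0 \<and> W v = l *\<^sub>R v}"

definition lambda_max :: "('a::real_vector \<Rightarrow> 'a) \<Rightarrow> real" where
  "lambda_max W = Max (eigenvalues_of W)"

definition lambda_min_pos :: "('a::real_vector \<Rightarrow> 'a) \<Rightarrow> real" where
  "lambda_min_pos W = Min {l \<in> eigenvalues_of W. l > 0}"

definition pinv :: "('a::real_vector \<Rightarrow> 'a) \<Rightarrow> 'a \<Rightarrow> 'a" where
  "pinv W z = (THE v. v \<in> range W \<and> W v = z)"

definition normWdag_sq :: "('a::real_inner \<Rightarrow> 'a) \<Rightarrow> 'a \<Rightarrow> real" where
  "normWdag_sq W z = inner (pinv W z) z"

definition normM_sq :: "('a::real_inner \<Rightarrow> 'a) \<Rightarrow> real \<Rightarrow> real \<Rightarrow> 'a \<Rightarrow> 'a \<Rightarrow> real" where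
  "normM_sq W \<theta> lam y z = 1 / \<theta> * (norm y)\<^sup>2 + 1 / lam * normWdag_sq W z"

definition hfun :: "real \<Rightarrow> real \<Rightarrow> 'a::real_inner \<Rightarrow> 'a \<Rightarrow> real" where
  "hfun \<mu> \<nu> y z = 1 / \<mu> * (norm (y + z))\<^sup>2 + \<nu> / 2 * (norm y)\<^sup>2"

definition grad_y_h :: "real \<Rightarrow> real \<Rightarrow> 'a::real_inner \<Rightarrow> 'a \<Rightarrow> 'a" where
  "grad_y_h \<mu> \<nu> y z = (2 / \<mu>) *\<^sub>R (y + z) + \<nu> *\<^sub>R y"

definition grad_z_h :: "real \<Rightarrow> real \<Rightarrow> 'a::real_inner \<Rightarrow> 'a \<Rightarrow> 'a" where
  "grad_z_h \<mu> \<nu> y z = (2 / \<mu>) *\<^sub>R (y + z)"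

definition Dh :: "real \<Rightarrow> real \<Rightarrow> 'a::real_inner \<Rightarrow> 'a \<Rightarrow> 'a \<Rightarrow> 'a \<Rightarrow> real" where
  "Dh \<mu> \<nu> u1 u2 v1 v2 = hfun \<mu> \<nu> u1 u2 - hfun \<mu> \<nu> v1 v2
     - inner (grad_y_h \<mu> \<nu> v1 v2) (u1 - v1) - inner (grad_z_h \<mu> \<nu> v1 v2) (u2 - v2)"

end

theory Submission imports Defs begin
lemma quad_zero:
  fixes A c :: real
  assumes h: "\<And>t. 0 \<le> -2*t*A + t^2*c" and c: "0 \<le> c"
  shows "A = 0"
proof -
  define t where "t = A/(c+1)"
  have cp: "c + 1 > 0" using c by simp
  have tA: "t * (c+1) = A" using cp by (simp add: t_def)
  have "0 \<le> -2*t*A + t^2*c" using h by blast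
  hence "0 \<le> (-2*t*A + t^2*c) * (c+1)" using cp by simp
  also have "\<dots> = -2*A*(t*(c+1)) + t*(t*(c+1))*c" by (simp add: algebra_simps power2_eq_square)
  also have "\<dots> = -2*A*A + t*A*c" by (simp only: tA)
  finally have "0 \<le> -2*A*A + t*A*c" .
  hence "0 \<le> (-2*A*A + t*A*c)*(c+1)" using cp by simp
  also have "\<dots> = -2*A*A*(c+1) + (t*(c+1))*A*c" by (simp add: algebra_simps)
  also have "\<dots> = -2*A*A*(c+1) + A*A*c" by (simp only: tA)
  also have "\<dots> = -(A*A*(c+2))" by (simp add: algebra_simps)
  finally have "A*A*(c+2) \<le> 0" by simp
  hence "A*A \<le> 0" using c by (smt (verit) mult_pos_pos zero_less_mult_iff)
  thus ?thesis by (auto simp add: mult_le_0_iff)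
qed

lemma quad_cs:
  fixes a b c :: real
  assumes h: "\<And>t. 0 \<le> a - 2*t*b + t^2*c" and a: "0 \<le> a" and c: "0 \<le> c"
  shows "b^2 \<le> a * c"
proof (cases "c = 0")
  case True
  show ?thesis
  proof (cases "b = 0")
    case False
    have "0 \<le> a - 2*((a+1)/(2*b))*b + ((a+1)/(2*b))^2*c" using h by blast
    also have "\<dots> = -1" using False True by (simp add: field_simps)
    finally show ?thesis by simp
  qed (use a c in simp)
next
  case False
  hence cp: "c > 0" using c by simp
  have "0 \<le> a - 2*(b/c)*b + (b/c)^2*c" using h by blast
  also have "\<dots> = a - b^2/c" using cp by (simp add: field_simps power2_eq_square)
  finally have "b^2/c \<le> a" by simp
  thus ?thesis using cp by (simp add: field_simps)
qed

lemma range_sub: "linear W \<Longrightarrow> subspace (range W)"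
  by (simp add: linear_subspace_image)

lemma ker_of_perp:
  fixes W :: "'a::real_inner \<Rightarrow> 'a"
  assumes sym: "\<And>u v. inner (W u) v = inner u (W v)"
    and h: "\<And>w. w \<in> range W \<Longrightarrow> inner x w = 0"
  shows "W x = 0"
proof -
  have "inner (W x) (W x) = inner x (W (W x))" by (rule sym)
  also have "\<dots> = 0" using h by blast
  finally show ?thesis by simp
qed

lemma range_ker0:
  fixes W :: "'a::real_inner \<Rightarrow> 'a"
  assumes sym: "\<And>u v. inner (W u) v = inner u (W v)"
    and v: "v \<in> range W" and w: "W v = 0"
  shows "v = 0"
proof -
  obtain s where s: "v = W s" using v by blast
  have "inner v v = inner s (W v)" using s sym by simp
  thus ?thesis using w by simp
qed

lemma perp_ker_in_range:
  fixes W :: "'a::euclidean_space \<Rightarrow> 'a"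
  assumes lin: "linear W" and sym: "\<And>u v. inner (W u) v = inner u (W v)"
    and h: "\<And>u. W u = 0 \<Longrightarrow> inner g u = 0"
  shows "g \<in> range W"
proof -
  obtain y z where y: "y \<in> span (range W)" and z: "\<And>w. w \<in> span (range W) \<Longrightarrow> orthogonal z w"
    and gyz: "g = y + z" using orthogonal_subspace_decomp_exists by blast
  have sp: "span (range W) = range W" using range_sub[OF lin] span_eq_iff by blast
  have Wz: "W z = 0" using sym by (rule ker_of_perp) (use z sp in \<open>auto simp: orthogonal_def\<close>)
  have "inner g z = 0" using h[OF Wz] .
  moreover have "inner y z = 0" using z[OF y] by (simp add: orthogonal_def inner_commute)
  ultimately have "inner z z = 0" using gyz by (simp add: inner_add_left)
  hence "z = 0" by simp
  thus ?thesis using gyz y sp by simp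
qed

lemma pinv_unique:
  fixes W :: "'a::real_inner \<Rightarrow> 'a"
  assumes lin: "linear W" and sym: "\<And>u v. inner (W u) v = inner u (W v)"
    and v: "v \<in> range W"
  shows "pinv W (W v) = v"
  unfolding pinv_def
proof (rule the_equality)
  show "v \<in> range W \<and> W v = W v" using v by simp
next
  fix v' assume a: "v' \<in> range W \<and> W v' = W v"
  have "v' - v \<in> range W" using a v range_sub[OF lin] by (simp add: subspace_diff)
  moreover have "W (v' - v) = 0" using a lin by (simp add: linear_diff)
  ultimately have "v' - v = 0" using range_ker0[OF sym] by blast
  thus "v' = v" by simp
qed

lemma pinv_props:
  fixes W :: "'a::euclidean_space \<Rightarrow> 'a"
  assumes lin: "linear W" and sym: "\<And>u v. inner (W u) v = inner u (W v)"
    and p: "p \<in> range W"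
  shows "pinv W p \<in> range W \<and> W (pinv W p) = p"
proof -
  obtain u where u: "p = W u" using p by blast
  obtain y z where y: "y \<in> span (range W)" and z: "\<And>w. w \<in> span (range W) \<Longrightarrow> orthogonal z w"
    and gyz: "u = y + z" using orthogonal_subspace_decomp_exists by blast
  have sp: "span (range W) = range W" using range_sub[OF lin] span_eq_iff by blast
  have Wz: "W z = 0" using sym by (rule ker_of_perp) (use z sp in \<open>auto simp: orthogonal_def\<close>)
  have Wy: "W y = p" using u gyz Wz lin by (simp add: linear_add)
  have yR: "y \<in> range W" using y sp by simp
  have "pinv W p = y" using pinv_unique[OF lin sym yR] Wy by simp
  thus ?thesis using yR Wy by simp
qed

lemma pinv_lin:
  fixes W :: "'a::euclidean_space \<Rightarrow> 'a"
  assumes lin: "linear W" and sym: "\<And>u v. inner (W u) v = inner u (W v)"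
    and p: "p \<in> range W" and q: "q \<in> range W"
  shows "pinv W (a *\<^sub>R p + b *\<^sub>R q) = a *\<^sub>R pinv W p + b *\<^sub>R pinv W q"
proof -
  have P: "pinv W p \<in> range W" "W (pinv W p) = p" using pinv_props[OF lin sym p] by auto
  have Q: "pinv W q \<in> range W" "W (pinv W q) = q" using pinv_props[OF lin sym q] by auto
  have R: "a *\<^sub>R pinv W p + b *\<^sub>R pinv W q \<in> range W"
    using P Q range_sub[OF lin] by (simp add: subspace_add subspace_scale)
  have "W (a *\<^sub>R pinv W p + b *\<^sub>R pinv W q) = a *\<^sub>R p + b *\<^sub>R q"
    using P Q lin by (simp add: linear_add linear_scale)
  thus ?thesis using pinv_unique[OF lin sym R] by simp
qed

lemma pinv_diff:
  fixes W :: "'a::euclidean_space \<Rightarrow> 'a"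
  assumes lin: "linear W" and sym: "\<And>u v. inner (W u) v = inner u (W v)"
    and p: "p \<in> range W" and q: "q \<in> range W"
  shows "pinv W (p - q) = pinv W p - pinv W q"
  using pinv_lin[OF lin sym p q, of 1 "-1"] by simp

lemma pinv_sym:
  fixes W :: "'a::euclidean_space \<Rightarrow> 'a"
  assumes lin: "linear W" and sym: "\<And>u v. inner (W u) v = inner u (W v)"
    and p: "p \<in> range W" and q: "q \<in> range W"
  shows "inner (pinv W p) q = inner (pinv W q) p"
proof -
  have P: "W (pinv W p) = p" using pinv_props[OF lin sym p] by auto
  have Q: "W (pinv W q) = q" using pinv_props[OF lin sym q] by auto
  have "inner (pinv W p) q = inner (pinv W p) (W (pinv W q))" using Q by simp
  also have "\<dots> = inner p (pinv W q)" using sym[of "pinv W p" "pinv W q"] P by simp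
  finally show ?thesis by (simp add: inner_commute)
qed

lemma pinvW_inner:
  fixes W :: "'a::euclidean_space \<Rightarrow> 'a"
  assumes lin: "linear W" and sym: "\<And>u v. inner (W u) v = inner u (W v)"
    and q: "q \<in> range W"
  shows "inner (pinv W (W u)) q = inner u q"
proof -
  have WR: "W u \<in> range W" by simp
  have P: "W (pinv W (W u)) = W u" using pinv_props[OF lin sym WR] by auto
  have Q: "W (pinv W q) = q" using pinv_props[OF lin sym q] by auto
  have "inner (pinv W (W u)) q = inner (pinv W (W u)) (W (pinv W q))" using Q by simp
  also have "\<dots> = inner (W u) (pinv W q)" using sym[of "pinv W (W u)" "pinv W q"] P by simp
  also have "\<dots> = inner u (W (pinv W q))" using sym by simp
  finally show ?thesis using Q by simp
qed

lemma N_nonneg: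
  fixes W :: "'a::euclidean_space \<Rightarrow> 'a"
  assumes lin: "linear W" and sym: "\<And>u v. inner (W u) v = inner u (W v)"
    and psd: "\<And>u. 0 \<le> inner (W u) u" and p: "p \<in> range W"
  shows "0 \<le> normWdag_sq W p"
proof -
  have P: "W (pinv W p) = p" using pinv_props[OF lin sym p] by auto
  have "normWdag_sq W p = inner (W (pinv W p)) (pinv W p)"
    unfolding normWdag_sq_def using P by (simp add: inner_commute)
  thus ?thesis using psd by simp
qed
lemma max_eig:
  fixes W :: "'a::euclidean_space \<Rightarrow> 'a"
  assumes lin: "linear W" and sym: "\<And>u v. inner (W u) v = inner u (W v)"
    and S: "subspace S" and inv: "\<And>u. u \<in> S \<Longrightarrow> W u \<in> S"
    and s: "s \<in> S" "s \<noteq> 0"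
  obtains e where "e \<in> S" "norm e = 1" "W e = inner (W e) e *\<^sub>R e"
    "\<And>u. u \<in> S \<Longrightarrow> inner (W u) u \<le> inner (W e) e * (norm u)^2"
proof -
  define K where "K = S \<inter> sphere 0 1"
  have cK: "compact K" unfolding K_def
    by (simp add: closed_subspace[OF S] compact_Int_closed compact_sphere Int_commute
        closed_Int_compact)
  have "s /\<^sub>R norm s \<in> K" unfolding K_def using s S by (simp add: subspace_scale)
  hence nK: "K \<noteq> {}" by blast
  have bl: "bounded_linear W" using lin linear_conv_bounded_linear by blast
  have cont: "continuous_on K (\<lambda>u. inner (W u) u)"
    by (intro continuous_intros linear_continuous_on bl)
  obtain e where eK: "e \<in> K" and emax: "\<And>y. y \<in> K \<Longrightarrow> inner (W y) y \<le> inner (W e) e"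
    using continuous_attains_sup[OF cK nK cont] by blast
  define M where "M = inner (W e) e"
  have eS: "e \<in> S" and en: "norm e = 1" using eK by (auto simp: K_def)
  have bound: "inner (W u) u \<le> M * (norm u)^2" if u: "u \<in> S" for u
  proof (cases "u = 0")
    case True thus ?thesis using lin by (simp add: linear_0)
  next
    case False
    have "u /\<^sub>R norm u \<in> K" unfolding K_def using u False S by (simp add: subspace_scale)
    hence "inner (W (u /\<^sub>R norm u)) (u /\<^sub>R norm u) \<le> M" using emax M_def by blast
    hence "inner (W u) u / (norm u)^2 \<le> M" using lin by (simp add: linear_scale power2_eq_square divide_inverse mult_ac)
    thus ?thesis using False by (simp add: field_simps)
  qed
  define r where "r = W e - M *\<^sub>R e"
  have rS: "r \<in> S" unfolding r_def using eS inv S by (simp add: subspace_diff subspace_scale)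
  have rr: "inner (W e) r - M * inner e r = inner r r" unfolding r_def
    by (simp add: inner_diff_left)
  have ee: "inner e e = 1" using en by (simp add: power2_norm_eq_inner[symmetric])
  have Wre: "inner (W r) e = inner (W e) r" using sym[of r e] by (simp add: inner_commute)
  have "\<And>t. 0 \<le> -2*t*(inner r r) + t^2*(M * inner r r - inner (W r) r)"
  proof -
    fix t :: real
    have "inner (W (e + t *\<^sub>R r)) (e + t *\<^sub>R r) \<le> M * (norm (e + t *\<^sub>R r))^2"
      using bound eS rS S by (simp add: subspace_add subspace_scale)
    moreover have "inner (W (e + t *\<^sub>R r)) (e + t *\<^sub>R r) = inner (W e) e + 2*t*inner (W e) r + t^2 * inner (W r) r"
      using lin Wre by (simp add: linear_add linear_scale inner_add_left inner_add_right power2_eq_square algebra_simps)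
    moreover have "(norm (e + t *\<^sub>R r))^2 = 1 + 2*t*inner e r + t^2 * inner r r"
      unfolding power2_norm_eq_inner using ee by (simp add: inner_add_left inner_add_right power2_eq_square algebra_simps inner_commute)
    ultimately have "inner (W e) e + 2*t*inner (W e) r + t^2 * inner (W r) r \<le> M * (1 + 2*t*inner e r + t^2 * inner r r)" by simp
    hence "0 \<le> -2*t*(inner (W e) r - M * inner e r) + t^2*(M * inner r r - inner (W r) r)"
      using M_def by (simp add: algebra_simps)
    thus "0 \<le> -2*t*(inner r r) + t^2*(M * inner r r - inner (W r) r)" using rr by simp
  qed
  moreover have "0 \<le> M * inner r r - inner (W r) r" using bound[OF rS] by (simp add: power2_norm_eq_inner)
  ultimately have "inner r r = 0" by (rule quad_zero)
  hence "r = 0" by simp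
  hence "W e = M *\<^sub>R e" unfolding r_def by simp
  thus ?thesis using that eS en bound M_def by blast
qed

lemma eig_finite:
  fixes W :: "'a::euclidean_space \<Rightarrow> 'a"
  assumes sym: "\<And>u v. inner (W u) v = inner u (W v)"
  shows "finite (eigenvalues_of W)"
proof -
  define E where "E = eigenvalues_of W"
  define v where "v l = (SOME v. v \<noteq> 0 \<and> W v = l *\<^sub>R v)" for l
  have vl: "v l \<noteq> 0 \<and> W (v l) = l *\<^sub>R v l" if "l \<in> E" for l
    using that unfolding E_def eigenvalues_of_def v_def by (metis (mono_tags, lifting) mem_Collect_eq someI_ex)
  have inj: "inj_on v E"
  proof (rule inj_onI)
    fix l1 l2 assume a: "l1 \<in> E" "l2 \<in> E" "v l1 = v l2"
    hence "l1 *\<^sub>R v l1 = l2 *\<^sub>R v l1" using vl by metis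
    thus "l1 = l2" using vl[OF a(1)] by simp
  qed
  have po: "pairwise orthogonal (v ` E)"
  proof (rule pairwiseI)
    fix x y assume xy: "x \<in> v ` E" "y \<in> v ` E" "x \<noteq> y"
    obtain l1 l2 where l: "l1 \<in> E" "l2 \<in> E" "x = v l1" "y = v l2" using xy by blast
    have ne: "l1 \<noteq> l2" using l xy by blast
    have "l1 * inner x y = inner (W x) y" using vl[OF l(1)] l by simp
    also have "\<dots> = inner x (W y)" by (rule sym)
    also have "\<dots> = l2 * inner x y" using vl[OF l(2)] l by simp
    finally have "(l1 - l2) * inner x y = 0" by (simp add: algebra_simps)
    thus "orthogonal x y" using ne by (simp add: orthogonal_def)
  qed
  have "0 \<notin> v ` E" using vl by force
  hence "independent (v ` E)" using po pairwise_orthogonal_independent by blast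
  hence "finite (v ` E)" by (rule finiteI_independent)
  thus ?thesis using finite_imageD inj E_def by blast
qed

lemma lmax_bound:
  fixes W :: "'a::euclidean_space \<Rightarrow> 'a"
  assumes lin: "linear W" and sym: "\<And>u v. inner (W u) v = inner u (W v)"
    and psd: "\<And>u. 0 \<le> inner (W u) u"
  shows "(norm (W v))^2 \<le> lambda_max W * inner (W v) v"
proof -
  obtain b :: 'a where b: "b \<in> Basis" using nonempty_Basis by blast
  hence b0: "b \<noteq> 0" by auto
  obtain e where e0: "e \<in> UNIV" and e: "norm e = 1" "W e = inner (W e) e *\<^sub>R e"
    "\<And>u. u \<in> UNIV \<Longrightarrow> inner (W u) u \<le> inner (W e) e * (norm u)^2"
    by (rule max_eig[OF lin sym subspace_UNIV _ _ b0]) auto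
  define M where "M = inner (W e) e"
  have "M \<in> eigenvalues_of W" unfolding eigenvalues_of_def M_def using e by (intro CollectI exI[of _ e]) auto
  hence Ml: "M \<le> lambda_max W" unfolding lambda_max_def using eig_finite[OF sym] by simp
  have M0: "0 \<le> M" using psd M_def by simp
  define a where "a = inner (W v) v"
  define bb where "bb = inner (W v) (W v)"
  define c where "c = inner (W (W v)) (W v)"
  have a0: "0 \<le> a" using psd a_def by simp
  have c0: "0 \<le> c" using psd c_def by simp
  have cM: "c \<le> M * bb" using e(3)[of "W v"] unfolding c_def bb_def M_def by (simp add: power2_norm_eq_inner)
  have "\<And>t. 0 \<le> a - 2*t*bb + t^2*c"
  proof -
    fix t :: real
    have s1: "inner (W (W v)) v = bb" unfolding bb_def using sym[of "W v" v] by (simp add: inner_commute)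
    have "0 \<le> inner (W (v - t *\<^sub>R W v)) (v - t *\<^sub>R W v)" by (rule psd)
    also have "\<dots> = inner (W v) v - t * inner (W v) (W v) - t * inner (W (W v)) v + t*t* inner (W (W v)) (W v)" using lin
      by (simp add: linear_diff linear_scale inner_diff_left inner_diff_right algebra_simps)
    also have "\<dots> = a - 2*t*bb + t^2*c" unfolding a_def c_def using s1
      by (simp add: power2_eq_square bb_def)
    finally show "0 \<le> a - 2*t*bb + t^2*c" .
  qed
  hence cs: "bb^2 \<le> a * c" using quad_cs a0 c0 by blast
  have "bb \<le> lambda_max W * a"
  proof (cases "bb = 0")
    case True thus ?thesis using Ml M0 a0 by simp
  next
    case False
    hence bp: "bb > 0" unfolding bb_def by simp
    have "bb * bb \<le> a * c" using cs by (simp add: power2_eq_square)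
    also have "\<dots> \<le> a * (M*bb)" by (intro mult_left_mono cM a0)
    finally have "bb * bb \<le> (a * M) * bb" by (simp add: mult.assoc)
    hence "bb \<le> a * M" using bp by simp
    also have "\<dots> \<le> a * lambda_max W" using Ml a0 by (simp add: mult_left_mono)
    finally show ?thesis by (simp add: mult.commute)
  qed
  thus ?thesis unfolding bb_def a_def by (simp add: power2_norm_eq_inner)
qed

lemma lmin_bound:
  fixes W :: "'a::euclidean_space \<Rightarrow> 'a"
  assumes lin: "linear W" and sym: "\<And>u v. inner (W u) v = inner u (W v)"
    and psd: "\<And>u. 0 \<le> inner (W u) u" and v: "v \<in> range W"
  shows "lambda_min_pos W * inner (W v) v \<le> (norm (W v))^2"
proof (cases "W v = 0")
  case True thus ?thesis by simp
next
  case False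
  have lin': "linear (\<lambda>x. - W x)" using lin by (rule module_hom_neg)
  have sym': "\<And>u w. inner (- W u) w = inner u (- W w)" using sym by simp
  have inv: "\<And>u. u \<in> range W \<Longrightarrow> - W u \<in> range W" by (metis lin linear_neg rangeI)
  obtain e where e: "e \<in> range W" "norm e = 1" "- W e = inner (- W e) e *\<^sub>R e"
    "\<And>u. u \<in> range W \<Longrightarrow> inner (- W u) u \<le> inner (- W e) e * (norm u)^2"
    using max_eig[OF lin' sym' range_sub[OF lin] inv, of "W v"] False by blast
  define m where "m = inner (W e) e"
  have We: "W e = m *\<^sub>R e" using e(3) unfolding m_def by (metis inner_minus_left minus_equation_iff scaleR_minus_left)
  have mb: "\<And>u. u \<in> range W \<Longrightarrow> m * (norm u)^2 \<le> inner (W u) u" using e(4) unfolding m_def by fastforce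
  have "m \<noteq> 0"
  proof
    assume "m = 0"
    hence "W e = 0" using We by simp
    hence "e = 0" using range_ker0[OF sym e(1)] by blast
    thus False using e(2) by simp
  qed
  hence mp: "m > 0" using psd[of e] m_def by simp
  have "m \<in> {l \<in> eigenvalues_of W. l > 0}" unfolding eigenvalues_of_def proof (intro CollectI conjI exI[of _ e])
    show "e \<noteq> 0" using e(2) by auto
  qed (use We mp in auto)
  hence lm: "lambda_min_pos W \<le> m" unfolding lambda_min_pos_def using eig_finite[OF sym] by simp
  define a where "a = inner (W v) v"
  have a0: "0 \<le> a" using psd a_def by simp
  have am: "m * (norm v)^2 \<le> a" using mb[OF v] a_def by simp
  have cs: "a^2 \<le> (norm (W v))^2 * (norm v)^2" unfolding a_def
    using Cauchy_Schwarz_ineq[of "W v" v] by (simp add: power2_norm_eq_inner)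
  have "m * a \<le> (norm (W v))^2"
  proof (cases "a = 0")
    case True thus ?thesis by simp
  next
    case False
    hence ap: "a > 0" using a0 by simp
    have "m * a * a = m * a^2" by (simp add: power2_eq_square)
    also have "\<dots> \<le> m * ((norm (W v))^2 * (norm v)^2)" using cs mp by simp
    also have "\<dots> = (norm (W v))^2 * (m * (norm v)^2)" by simp
    also have "\<dots> \<le> (norm (W v))^2 * a" using am by (simp add: mult_left_mono)
    finally have "m * a * a \<le> (norm (W v))^2 * a" .
    thus ?thesis using ap by simp
  qed
  moreover have "lambda_min_pos W * a \<le> m * a" using lm a0 by (simp add: mult_right_mono)
  ultimately show ?thesis using a_def by simp
qed
definition Qf :: "real \<Rightarrow> real \<Rightarrow> 'a::real_inner \<Rightarrow> 'a \<Rightarrow> real" where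
  "Qf \<mu> \<nu> p q = 1 / \<mu> * (norm (p + q))\<^sup>2 + \<nu> / 2 * (norm p)\<^sup>2"

lemma polar1:
  fixes p q r :: "'a::real_inner"
  shows "(norm (p - r))^2 - (norm (q - r))^2 + (norm (p - q))^2 = 2 * inner (p - q) (p - r)"
  unfolding power2_norm_eq_inner
  by (simp add: inner_diff_left inner_diff_right inner_commute algebra_simps)

lemma polar2:
  fixes p q r :: "'a::real_inner"
  shows "2 * inner (p - q) (q - r) = (norm (p - r))^2 - (norm (p - q))^2 - (norm (q - r))^2"
  unfolding power2_norm_eq_inner
  by (simp add: inner_diff_left inner_diff_right inner_commute algebra_simps)

lemma Qf_scale:
  fixes u1 u2 :: "'a::real_inner"
  shows "Qf \<mu> \<nu> (s *\<^sub>R u1) (s *\<^sub>R u2) = s^2 * Qf \<mu> \<nu> u1 u2"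
proof -
  have e: "s *\<^sub>R u1 + s *\<^sub>R u2 = s *\<^sub>R (u1 + u2)" by (simp add: scaleR_add_right)
  show ?thesis unfolding Qf_def by (simp only: e norm_scaleR power_mult_distrib power2_abs) (simp add: algebra_simps)
qed

lemma Qf_nonneg:
  fixes u1 u2 :: "'a::real_inner"
  assumes "0 < \<mu>" "0 \<le> \<nu>"
  shows "0 \<le> Qf \<mu> \<nu> u1 u2"
  unfolding Qf_def using assms by simp

lemma sum_sq_le:
  fixes u1 u2 :: "'a::real_inner"
  shows "(norm (u1 + u2))^2 \<le> 2 * (norm u1)^2 + 2 * (norm u2)^2"
proof -
  have "(norm (u1 + u2))^2 + (norm (u1 - u2))^2 = 2 * (norm u1)^2 + 2 * (norm u2)^2"
    unfolding power2_norm_eq_inner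
    by (simp add: inner_diff_left inner_diff_right inner_add_left inner_add_right inner_commute)
  thus ?thesis by (smt (verit) zero_le_power2)
qed

lemma Qf_upper:
  fixes u1 u2 :: "'a::real_inner"
  assumes "0 < \<mu>"
  shows "Qf \<mu> \<nu> u1 u2 \<le> (2/\<mu> + \<nu>/2) * (norm u1)^2 + 2/\<mu> * (norm u2)^2"
proof -
  have "1/\<mu> * (norm (u1 + u2))^2 \<le> 1/\<mu> * (2 * (norm u1)^2 + 2 * (norm u2)^2)"
    using assms sum_sq_le[of u1 u2] by (intro mult_left_mono) auto
  thus ?thesis unfolding Qf_def by (simp add: algebra_simps)
qed

lemma Qf_lower:
  fixes a w :: "'a::real_inner"
  assumes mu: "0 < \<mu>" and b0: "0 \<le> \<beta>" and b1: "\<beta> \<le> 1/\<mu>" and b2: "\<beta> \<le> \<nu>/3"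
  shows "\<beta> * (norm a)^2 + \<beta> * (norm w)^2 \<le> 2 * Qf \<mu> \<nu> a w"
proof -
  have pw: "(norm w)^2 \<le> 2 * (norm (a + w))^2 + 2 * (norm a)^2"
    using sum_sq_le[of "a + w" "- a"] by simp
  have "\<beta> * (norm w)^2 \<le> \<beta> * (2 * (norm (a + w))^2 + 2 * (norm a)^2)" using pw b0 by (rule mult_left_mono)
  moreover have "\<beta> * (norm (a + w))^2 \<le> 1/\<mu> * (norm (a + w))^2" using b1 by (intro mult_right_mono) auto
  moreover have "3 * \<beta> * (norm a)^2 \<le> \<nu> * (norm a)^2" using b2 by (intro mult_right_mono) auto
  ultimately show ?thesis unfolding Qf_def by (simp add: algebra_simps)
qed

lemma Npolar:
  fixes W :: "'a::euclidean_space \<Rightarrow> 'a"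
  assumes lin: "linear W" and sym: "\<And>u v. inner (W u) v = inner u (W v)"
    and p: "p \<in> range W" and q: "q \<in> range W" and r: "r \<in> range W"
  shows "normWdag_sq W (p - r) - normWdag_sq W (q - r) + normWdag_sq W (p - q) = 2 * inner (pinv W (p - q)) (p - r)"
    and "2 * inner (pinv W (p - q)) (q - r) = normWdag_sq W (p - r) - normWdag_sq W (p - q) - normWdag_sq W (q - r)"
proof -
  note pd = pinv_diff[OF lin sym]
  have s1: "inner (pinv W p) q = inner (pinv W q) p" by (rule pinv_sym[OF lin sym p q])
  have s2: "inner (pinv W p) r = inner (pinv W r) p" by (rule pinv_sym[OF lin sym p r])
  have s3: "inner (pinv W q) r = inner (pinv W r) q" by (rule pinv_sym[OF lin sym q r])
  show "normWdag_sq W (p - r) - normWdag_sq W (q - r) + normWdag_sq W (p - q) = 2 * inner (pinv W (p - q)) (p - r)"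
    unfolding normWdag_sq_def using p q r s1 s2 s3
    by (simp add: pd inner_diff_left inner_diff_right algebra_simps)
  show "2 * inner (pinv W (p - q)) (q - r) = normWdag_sq W (p - r) - normWdag_sq W (p - q) - normWdag_sq W (q - r)"
    unfolding normWdag_sq_def using p q r s1 s2 s3
    by (simp add: pd inner_diff_left inner_diff_right algebra_simps)
qed

lemma Dh_eq:
  fixes u1 u2 v1 v2 :: "'a::real_inner"
  assumes "\<mu> \<noteq> 0"
  shows "Dh \<mu> \<nu> u1 u2 v1 v2 = Qf \<mu> \<nu> (u1 - v1) (u2 - v2)"
  unfolding Dh_def hfun_def grad_y_h_def grad_z_h_def Qf_def power2_norm_eq_inner
  using assms
  by (simp add: inner_diff_left inner_diff_right inner_add_left inner_add_right inner_commute
      algebra_simps add_divide_distrib diff_divide_distrib)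

lemma Qf_diff:
  fixes x1 x2 d1 d2 :: "'a::real_inner"
  shows "Qf \<mu> \<nu> (x1 - d1) (x2 - d2) = Qf \<mu> \<nu> x1 x2 - 2 * (1/\<mu> * inner (d1+d2) (x1+x2) + \<nu>/2 * inner d1 x1) + Qf \<mu> \<nu> d1 d2"
proof -
  have e: "x1 - d1 + (x2 - d2) = (x1 + x2) - (d1 + d2)" by (simp add: algebra_simps)
  have n: "\<And>u v::'a. (norm (u - v))^2 = (norm u)^2 - 2 * inner v u + (norm v)^2"
    unfolding power2_norm_eq_inner by (simp add: inner_diff_left inner_diff_right inner_commute)
  show ?thesis unfolding Qf_def e n by (simp add: algebra_simps)
qed

lemma G_ident:
  fixes d1 d2 p1 p2 q1 q2 :: "'a::real_inner"
  assumes s: "\<sigma> \<noteq> 0"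
  shows "2 * (inner ((2/\<mu>) *\<^sub>R (d1 + d2) + \<nu> *\<^sub>R d1) ((1/\<sigma>) *\<^sub>R p1 - ((1-\<sigma>)/\<sigma>) *\<^sub>R q1)
            + inner ((2/\<mu>) *\<^sub>R (d1 + d2)) ((1/\<sigma>) *\<^sub>R p2 - ((1-\<sigma>)/\<sigma>) *\<^sub>R q2))
    = 2 * Qf \<mu> \<nu> d1 d2 + 2/\<sigma> * Qf \<mu> \<nu> p1 p2 - 2/\<sigma> * Qf \<mu> \<nu> (p1 - d1) (p2 - d2)
      - 2*(1-\<sigma>)/\<sigma> * Qf \<mu> \<nu> q1 q2 + 2*(1-\<sigma>)/\<sigma> * Qf \<mu> \<nu> (q1 - d1) (q2 - d2)"
proof -
  define Bp where "Bp = 1/\<mu> * inner (d1+d2) (p1+p2) + \<nu>/2 * inner d1 p1"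
  define Bq where "Bq = 1/\<mu> * inner (d1+d2) (q1+q2) + \<nu>/2 * inner d1 q1"
  have L: "2 * (inner ((2/\<mu>) *\<^sub>R (d1 + d2) + \<nu> *\<^sub>R d1) ((1/\<sigma>) *\<^sub>R p1 - ((1-\<sigma>)/\<sigma>) *\<^sub>R q1)
            + inner ((2/\<mu>) *\<^sub>R (d1 + d2)) ((1/\<sigma>) *\<^sub>R p2 - ((1-\<sigma>)/\<sigma>) *\<^sub>R q2))
         = 4/\<sigma> * Bp - 4*(1-\<sigma>)/\<sigma> * Bq"
    unfolding Bp_def Bq_def
    by (simp add: inner_add_left inner_add_right inner_diff_right algebra_simps divide_divide_eq_left diff_divide_distrib)
  show ?thesis unfolding L Qf_diff[of _ _ p1 d1] Qf_diff[of _ _ q1 d1] Bp_def[symmetric] Bq_def[symmetric]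
    using s by (simp add: field_simps)
qed
lemma cons_lin:
  assumes "x \<in> consensus_space" "u \<in> consensus_space"
  shows "x + t *\<^sub>R u \<in> consensus_space"
  unfolding consensus_space_def
proof (intro CollectI allI)
  fix i j
  have "x $ i = x $ j" "u $ i = u $ j" using assms unfolding consensus_space_def by blast+
  thus "(x + t *\<^sub>R u) $ i = (x + t *\<^sub>R u) $ j" by simp
qed

lemma grad_orth:
  fixes F :: "real^'d^'n \<Rightarrow> real" and gradF :: "real^'d^'n \<Rightarrow> real^'d^'n"
  assumes grad: "\<And>u. (F has_derivative (\<lambda>h. inner (gradF u) h)) (at u)"
    and xs_in: "xstar \<in> consensus_space"
    and xs_min: "\<And>u. u \<in> consensus_space \<Longrightarrow> F xstar \<le> F u"
    and u: "u \<in> consensus_space"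
  shows "inner (gradF xstar) u = 0"
proof -
  define g where "g t = F (xstar + t *\<^sub>R u)" for t :: real
  have d1: "((\<lambda>t::real. xstar + t *\<^sub>R u) has_derivative (\<lambda>t. t *\<^sub>R u)) (at 0)"
    by (intro derivative_eq_intros) auto
  have "((\<lambda>t. F (xstar + t *\<^sub>R u)) has_derivative (\<lambda>t. inner (gradF (xstar + 0 *\<^sub>R u)) (t *\<^sub>R u))) (at 0)"
    by (rule has_derivative_compose[OF d1 grad])
  hence "(g has_derivative (\<lambda>t. inner (gradF xstar) u * t)) (at 0)"
    unfolding g_def by (simp add: mult.commute)
  hence D: "(g has_field_derivative inner (gradF xstar) u) (at 0)"
    by (simp add: has_field_derivative_def)
  have "\<forall>y. \<bar>0 - y\<bar> < 1 \<longrightarrow> g 0 \<le> g y"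
    unfolding g_def using xs_min cons_lin[OF xs_in u] by simp
  thus ?thesis using DERIV_local_min[OF D, of 1] by simp
qed
lemma N_alt:
  fixes W :: "'a::euclidean_space \<Rightarrow> 'a"
  assumes lin: "linear W" and sym: "\<And>u v. inner (W u) v = inner u (W v)" and p: "p \<in> range W"
  shows "normWdag_sq W p = inner (W (pinv W p)) (pinv W p)"
  using pinv_props[OF lin sym p] unfolding normWdag_sq_def by (simp add: inner_commute)

lemma lmax_N:
  fixes W :: "'a::euclidean_space \<Rightarrow> 'a"
  assumes lin: "linear W" and sym: "\<And>u v. inner (W u) v = inner u (W v)"
    and psd: "\<And>u. 0 \<le> inner (W u) u" and p: "p \<in> range W"
  shows "(norm p)^2 \<le> lambda_max W * normWdag_sq W p"
  using lmax_bound[OF lin sym psd, of "pinv W p"] pinv_props[OF lin sym p] N_alt[OF lin sym p] by simp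

lemma lmin_N:
  fixes W :: "'a::euclidean_space \<Rightarrow> 'a"
  assumes lin: "linear W" and sym: "\<And>u v. inner (W u) v = inner u (W v)"
    and psd: "\<And>u. 0 \<le> inner (W u) u" and p: "p \<in> range W"
  shows "lambda_min_pos W * normWdag_sq W p \<le> (norm p)^2"
  using lmin_bound[OF lin sym psd, of "pinv W p"] pinv_props[OF lin sym p] N_alt[OF lin sym p] by simp

lemma lin_rec:
  fixes A A1 F F1 G S :: "'a::real_vector"
  assumes s: "\<sigma> \<noteq> 0" and f: "F1 = G + \<sigma> *\<^sub>R (A1 - A)" and g: "G = \<sigma> *\<^sub>R A + (1 - \<sigma>) *\<^sub>R F"
  shows "A1 - S = (1/\<sigma>) *\<^sub>R (F1 - S) - ((1-\<sigma>)/\<sigma>) *\<^sub>R (F - S)"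
proof -
  have f1: "F1 = (1-\<sigma>) *\<^sub>R F + \<sigma> *\<^sub>R A1" using f g by (simp add: algebra_simps)
  have c1: "\<sigma> * (1/\<sigma>) = 1" and c2: "\<sigma> * ((1-\<sigma>)/\<sigma>) = 1 - \<sigma>" using s by simp_all
  have "\<sigma> *\<^sub>R ((1/\<sigma>) *\<^sub>R (F1 - S) - ((1-\<sigma>)/\<sigma>) *\<^sub>R (F - S)) = (F1 - S) - (1 - \<sigma>) *\<^sub>R (F - S)"
    by (simp only: scaleR_diff_right scaleR_scaleR c1 c2 scaleR_one)
  also have "\<dots> = \<sigma> *\<^sub>R (A1 - S)" unfolding f1 by (simp add: algebra_simps)
  finally have "(1/\<sigma>) *\<^sub>R (F1 - S) - ((1-\<sigma>)/\<sigma>) *\<^sub>R (F - S) = A1 - S" using s by simp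
  thus ?thesis by (rule sym)
qed

lemma gy_diff:
  "grad_y_h \<mu> \<nu> a b - grad_y_h \<mu> \<nu> c d = (2/\<mu>) *\<^sub>R ((a - c) + (b - d)) + \<nu> *\<^sub>R (a - c)"
  unfolding grad_y_h_def by (simp add: algebra_simps)

lemma gz_diff:
  "grad_z_h \<mu> \<nu> a b - grad_z_h \<mu> \<nu> c d = (2/\<mu>) *\<^sub>R ((a - c) + (b - d))"
  unfolding grad_z_h_def by (simp add: algebra_simps)
lemma inv_le:
  fixes X l :: real
  assumes "0 < X" "0 < l" "l \<le> 1 / X"
  shows "X \<le> 1 / l"
  using assms by (simp add: pos_le_divide_eq mult.commute)

lemma final_comb:
  fixes A Y0 DY B Z0 DZ iy iz ygy zgz Gy Gz X Ygs Ygy Zgs Zgz Qd Qp Qq Qpd Qqd QD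
    \<theta> lam \<beta> \<gamma> \<nu> \<sigma> :: real
  assumes pos: "0 < \<theta>" "0 < lam" "0 < \<sigma>" "\<sigma> < 1"
    and Y1: "A - Y0 + DY = 2 * iy"
    and Y2: "iy = \<theta> * (\<beta> * ygy - Gy + \<nu> * A - X)"
    and Y3: "2 * ygy = Ygs - Ygy - A"
    and Z1: "B - Z0 + DZ = 2 * iz"
    and Z2: "iz = lam * (\<gamma> * zgz - Gz)"
    and Z3: "2 * zgz = Zgs - Zgz - B"
    and G: "2 * (Gy + Gz) = 2 * Qd + 2 / \<sigma> * Qp - 2 / \<sigma> * Qpd - 2 * (1 - \<sigma>) / \<sigma> * Qq + 2 * (1 - \<sigma>) / \<sigma> * Qqd"
    and QP: "Qpd = \<sigma>^2 * QD"
    and I1: "2 * \<sigma> * QD \<le> 1 / \<theta> * DY + 1 / lam * DZ"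
    and I2: "\<beta> * Ygs + \<gamma> * Zgs \<le> 2 * Qd"
    and I3: "0 \<le> Ygy" "0 \<le> Zgz" "0 \<le> Qqd" "0 \<le> \<beta>" "0 \<le> \<gamma>"
  shows "1 / \<theta> * A + 1 / lam * B
     \<le> 1 / \<theta> * Y0 + 1 / lam * Z0 - (\<beta> - 2 * \<nu>) * A - \<gamma> * B
        + 2 * (1 - \<sigma>) / \<sigma> * Qq - 2 / \<sigma> * Qp - 2 * X"
proof -
  have e1: "1/\<theta> * A - 1/\<theta> * Y0 + 1/\<theta> * DY = 2 * (\<beta> * ygy - Gy + \<nu> * A - X)"
  proof -
    have "1/\<theta> * A - 1/\<theta> * Y0 + 1/\<theta> * DY = 1/\<theta> * (A - Y0 + DY)" by (simp add: right_diff_distrib distrib_left)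
    also have "\<dots> = 1/\<theta> * (2 * (\<theta> * (\<beta> * ygy - Gy + \<nu> * A - X)))" using Y1 Y2 by simp
    also have "\<dots> = 2 * (\<beta> * ygy - Gy + \<nu> * A - X)" using pos by simp
    finally show ?thesis .
  qed
  have e2: "1/lam * B - 1/lam * Z0 + 1/lam * DZ = 2 * (\<gamma> * zgz - Gz)"
  proof -
    have "1/lam * B - 1/lam * Z0 + 1/lam * DZ = 1/lam * (B - Z0 + DZ)" by (simp add: right_diff_distrib distrib_left)
    also have "\<dots> = 1/lam * (2 * (lam * (\<gamma> * zgz - Gz)))" using Z1 Z2 by simp
    also have "\<dots> = 2 * (\<gamma> * zgz - Gz)" using pos by simp
    finally show ?thesis .
  qed
  have e3: "2 * (\<beta> * ygy) = \<beta> * Ygs - \<beta> * Ygy - \<beta> * A" using Y3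
    by (metis mult.left_commute right_diff_distrib)
  have e4: "2 * (\<gamma> * zgz) = \<gamma> * Zgs - \<gamma> * Zgz - \<gamma> * B" using Z3
    by (metis mult.left_commute right_diff_distrib)
  have e5: "2 / \<sigma> * Qpd = 2 * \<sigma> * QD" using QP pos by (simp add: power2_eq_square)
  have e6: "0 \<le> 2 * (1 - \<sigma>) / \<sigma> * Qqd" using pos I3 by simp
  have e7: "0 \<le> \<beta> * Ygy" "0 \<le> \<gamma> * Zgz" using I3 by simp_all
  have e8: "(\<beta> - 2 * \<nu>) * A = \<beta> * A - 2 * (\<nu> * A)" by (simp add: algebra_simps)
  show ?thesis using e1 e2 e3 e4 e5 e6 e7 e8 G I1 I2 by (simp add: algebra_simps)
qed
theorem mainTheorem11:
  fixes F :: "real^'d^'n \<Rightarrow> real"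
    and gradF :: "real^'d^'n \<Rightarrow> real^'d^'n"
    and W :: "real^'d^'n \<Rightarrow> real^'d^'n"
    and \<mu> L \<eta> \<theta> lam \<alpha> \<beta> \<gamma> \<nu> \<tau> \<sigma> :: real
    and x y z xf yf zf xg yg zg :: "nat \<Rightarrow> real^'d^'n"
    and xstar ystar zstar :: "real^'d^'n"
  assumes grad: "\<And>u. (F has_derivative (\<lambda>h. inner (gradF u) h)) (at u)"
    and sc: "mu_strongly_convex \<mu> F"
    and sm: "L_smooth L gradF"
    and muL: "0 < \<mu>" "\<mu> \<le> L"
    and Wlin: "linear W"
    and Wsym: "\<And>u v. inner (W u) v = inner u (W v)"
    and Wpsd: "\<And>u. 0 \<le> inner (W u) u"
    and Wker: "{u. W u = 0} = consensus_space"
    and xs_in: "xstar \<in> consensus_space"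
    and xs_min: "\<And>u. u \<in> consensus_space \<Longrightarrow> F xstar \<le> F u"
    and ys: "ystar = gradF xstar - (\<mu> / 2) *\<^sub>R xstar"
    and zs: "zstar = - gradF xstar"
    and pos: "0 < \<eta>" "0 < \<theta>" "0 < lam" "0 < \<alpha>" "0 < \<beta>" "0 < \<gamma>" "0 < \<nu>"
    and tau: "0 < \<tau>" "\<tau> < 1"
    and sigma: "0 < \<sigma>" "\<sigma> < 1"
    and z0: "z 0 \<in> range W"
    and init: "xf 0 = x 0" "yf 0 = y 0" "zf 0 = z 0"
    and xg_def: "\<And>k. xg k = \<tau> *\<^sub>R x k + (1 - \<tau>) *\<^sub>R xf k"
    and yg_def: "\<And>k. yg k = \<sigma> *\<^sub>R y k + (1 - \<sigma>) *\<^sub>R yf k"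
    and zg_def: "\<And>k. zg k = \<sigma> *\<^sub>R z k + (1 - \<sigma>) *\<^sub>R zf k"
    and x_upd: "\<And>k. x (Suc k) = x k + (\<eta> * \<alpha>) *\<^sub>R (xg k - x (Suc k))
                   - \<eta> *\<^sub>R (gradF (xg k) - (\<mu> / 2) *\<^sub>R xg k) + \<eta> *\<^sub>R y (Suc k)"
    and y_upd: "\<And>k. y (Suc k) = y k + (\<theta> * \<beta>) *\<^sub>R (yg k - y (Suc k))
                   - \<theta> *\<^sub>R grad_y_h \<mu> \<nu> (yg k) (zg k) + (\<theta> * \<nu>) *\<^sub>R y (Suc k) - \<theta> *\<^sub>R x (Suc k)"
    and z_upd: "\<And>k. z (Suc k) = z k + (lam * \<gamma>) *\<^sub>R (zg k - z (Suc k))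
                   - lam *\<^sub>R W (grad_z_h \<mu> \<nu> (yg k) (zg k))"
    and xf_upd: "\<And>k. xf (Suc k) = xg k + (2 * \<tau> / (2 - \<tau>)) *\<^sub>R (x (Suc k) - x k)"
    and yf_upd: "\<And>k. yf (Suc k) = yg k + \<sigma> *\<^sub>R (y (Suc k) - y k)"
    and zf_upd: "\<And>k. zf (Suc k) = zg k + \<sigma> *\<^sub>R (z (Suc k) - z k)"
    and th_bd: "\<theta> \<le> 1 / (\<sigma> * (4 / \<mu> + \<nu>))"
    and la_bd: "lam \<le> 1 / (4 * \<sigma> * lambda_max W / \<mu>)"
    and be_bd: "\<beta> \<le> min (1 / \<mu>) (\<nu> / 3)"
    and ga_bd: "\<gamma> \<le> lambda_min_pos W * \<beta>"
  shows "normM_sq W \<theta> lam (y (Suc k) - ystar) (z (Suc k) - zstar)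
     \<le> normM_sq W \<theta> lam (y k - ystar) (z k - zstar)
        - (\<beta> - 2 * \<nu>) * (norm (y (Suc k) - ystar))\<^sup>2
        - \<gamma> * normWdag_sq W (z (Suc k) - zstar)
        + 2 * (1 - \<sigma>) / \<sigma> * Dh \<mu> \<nu> (yf k) (zf k) ystar zstar
        - 2 / \<sigma> * Dh \<mu> \<nu> (yf (Suc k)) (zf (Suc k)) ystar zstar
        - 2 * inner (x (Suc k) - xstar) (y (Suc k) - ystar)"
proof -
  note lin = Wlin and sym = Wsym and psd = Wpsd
  have RS: "subspace (range W)" by (rule range_sub[OF lin])
  have Wx: "W xstar = 0" using Wker xs_in by blast
  have orth: "\<And>u. W u = 0 \<Longrightarrow> inner (gradF xstar) u = 0"
  proof -
    fix u assume "W u = 0"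
    hence "u \<in> consensus_space" using Wker by blast
    thus "inner (gradF xstar) u = 0" using grad_orth[OF grad xs_in xs_min] by blast
  qed
  have gR: "gradF xstar \<in> range W" by (rule perp_ker_in_range[OF lin sym orth])
  have zsR: "zstar \<in> range W" using zs gR RS by (simp add: subspace_neg)
  have mu0: "\<mu> \<noteq> 0" using muL by simp
  have s0: "\<sigma> \<noteq> 0" using sigma by simp
  have zR: "z j \<in> range W \<and> zf j \<in> range W" for j
  proof (induction j)
    case 0 thus ?case using z0 init by simp
  next
    case (Suc j)
    have zgR: "zg j \<in> range W" using Suc zg_def[of j] RS by (simp add: subspace_add subspace_scale)
    define c where "c = lam * \<gamma>"
    have c0: "1 + c \<noteq> 0" using pos unfolding c_def by (smt (verit) mult_pos_pos)
    have "z (Suc j) + c *\<^sub>R z (Suc j) = (z j + c *\<^sub>R (zg j - z (Suc j)) - lam *\<^sub>R W (grad_z_h \<mu> \<nu> (yg j) (zg j))) + c *\<^sub>R z (Suc j)"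
      unfolding c_def by (metis z_upd)
    also have "\<dots> = z j + c *\<^sub>R zg j - lam *\<^sub>R W (grad_z_h \<mu> \<nu> (yg j) (zg j))" by (simp add: algebra_simps)
    finally have e: "(1 + c) *\<^sub>R z (Suc j) = z j + c *\<^sub>R zg j - lam *\<^sub>R W (grad_z_h \<mu> \<nu> (yg j) (zg j))"
      by (simp add: algebra_simps)
    have "z j + c *\<^sub>R zg j - lam *\<^sub>R W (grad_z_h \<mu> \<nu> (yg j) (zg j)) \<in> range W"
      using Suc zgR RS by (simp add: subspace_add subspace_scale subspace_diff)
    hence "(1/(1+c)) *\<^sub>R ((1 + c) *\<^sub>R z (Suc j)) \<in> range W" unfolding e using RS by (simp add: subspace_scale)
    hence z1R: "z (Suc j) \<in> range W" using c0 by simp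
    have "zf (Suc j) \<in> range W" using zf_upd[of j] zgR z1R Suc RS by (simp add: subspace_add subspace_scale subspace_diff)
    thus ?case using z1R by simp
  qed
  have zgR: "zg j \<in> range W" for j using zR[of j] zg_def[of j] RS by (simp add: subspace_add subspace_scale)
  have ysum: "ystar + zstar = - (\<mu>/2) *\<^sub>R xstar" using ys zs by simp
  have gys: "grad_y_h \<mu> \<nu> ystar zstar = \<nu> *\<^sub>R ystar - xstar"
    unfolding grad_y_h_def ysum using mu0 by simp
  have gzs: "grad_z_h \<mu> \<nu> ystar zstar = - xstar"
    unfolding grad_z_h_def ysum using mu0 by simp
  have Y1: "(norm (y (Suc k) - ystar))^2 - (norm (y k - ystar))^2 + (norm (y (Suc k) - y k))^2
      = 2 * inner (y (Suc k) - y k) (y (Suc k) - ystar)" by (rule polar1)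
  have yv0: "y (Suc k) - y k = (\<theta> * \<beta>) *\<^sub>R (yg k - y (Suc k)) - \<theta> *\<^sub>R grad_y_h \<mu> \<nu> (yg k) (zg k) + (\<theta> * \<nu>) *\<^sub>R y (Suc k) - \<theta> *\<^sub>R x (Suc k)"
  proof -
    have "y (Suc k) - y k = (y k + (\<theta> * \<beta>) *\<^sub>R (yg k - y (Suc k))
                   - \<theta> *\<^sub>R grad_y_h \<mu> \<nu> (yg k) (zg k) + (\<theta> * \<nu>) *\<^sub>R y (Suc k) - \<theta> *\<^sub>R x (Suc k)) - y k"
      by (metis y_upd)
    thus ?thesis by (simp add: algebra_simps)
  qed
  have yv: "y (Suc k) - y k = \<theta> *\<^sub>R (\<beta> *\<^sub>R (yg k - y (Suc k)) - (grad_y_h \<mu> \<nu> (yg k) (zg k) - grad_y_h \<mu> \<nu> ystar zstar)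
        + \<nu> *\<^sub>R (y (Suc k) - ystar) - (x (Suc k) - xstar))"
    unfolding yv0 gys by (simp add: algebra_simps)
  have Y2: "inner (y (Suc k) - y k) (y (Suc k) - ystar) = \<theta> * (\<beta> * inner (yg k - y (Suc k)) (y (Suc k) - ystar)
       - inner (grad_y_h \<mu> \<nu> (yg k) (zg k) - grad_y_h \<mu> \<nu> ystar zstar) (y (Suc k) - ystar)
       + \<nu> * (norm (y (Suc k) - ystar))^2 - inner (x (Suc k) - xstar) (y (Suc k) - ystar))"
    unfolding yv by (simp add: inner_diff_left inner_add_left power2_norm_eq_inner algebra_simps)
  have Y3: "2 * inner (yg k - y (Suc k)) (y (Suc k) - ystar) = (norm (yg k - ystar))^2 - (norm (yg k - y (Suc k)))^2 - (norm (y (Suc k) - ystar))^2"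
    by (rule polar2)
  have bR: "z (Suc k) - zstar \<in> range W" using zR zsR RS by (simp add: subspace_diff)
  have Z1: "normWdag_sq W (z (Suc k) - zstar) - normWdag_sq W (z k - zstar) + normWdag_sq W (z (Suc k) - z k)
      = 2 * inner (pinv W (z (Suc k) - z k)) (z (Suc k) - zstar)"
    by (rule Npolar(1)[OF lin sym]) (use zR zsR in auto)
  have Z3: "2 * inner (pinv W (zg k - z (Suc k))) (z (Suc k) - zstar)
      = normWdag_sq W (zg k - zstar) - normWdag_sq W (zg k - z (Suc k)) - normWdag_sq W (z (Suc k) - zstar)"
    by (rule Npolar(2)[OF lin sym]) (use zR zsR zgR in auto)
  have zv: "z (Suc k) - z k = (lam * \<gamma>) *\<^sub>R (zg k - z (Suc k)) + (- lam) *\<^sub>R W (grad_z_h \<mu> \<nu> (yg k) (zg k))"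
  proof -
    have "z (Suc k) - z k = (z k + (lam * \<gamma>) *\<^sub>R (zg k - z (Suc k))
                   - lam *\<^sub>R W (grad_z_h \<mu> \<nu> (yg k) (zg k))) - z k"
      by (metis z_upd)
    thus ?thesis by (simp add: algebra_simps)
  qed
  have pz: "pinv W (z (Suc k) - z k) = (lam * \<gamma>) *\<^sub>R pinv W (zg k - z (Suc k)) + (- lam) *\<^sub>R pinv W (W (grad_z_h \<mu> \<nu> (yg k) (zg k)))"
    unfolding zv by (rule pinv_lin[OF lin sym]) (use zR zgR RS in \<open>auto simp: subspace_diff\<close>)
  have xb: "inner xstar (z (Suc k) - zstar) = 0"
  proof -
    have "W (pinv W (z (Suc k) - zstar)) = z (Suc k) - zstar" using pinv_props[OF lin sym bR] by simp
    hence "inner xstar (z (Suc k) - zstar) = inner xstar (W (pinv W (z (Suc k) - zstar)))" by simp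
    also have "\<dots> = inner (W xstar) (pinv W (z (Suc k) - zstar))" using sym by simp
    finally show ?thesis using Wx by simp
  qed
  have Z2: "inner (pinv W (z (Suc k) - z k)) (z (Suc k) - zstar) = lam * (\<gamma> * inner (pinv W (zg k - z (Suc k))) (z (Suc k) - zstar)
       - inner (grad_z_h \<mu> \<nu> (yg k) (zg k) - grad_z_h \<mu> \<nu> ystar zstar) (z (Suc k) - zstar))"
  proof -
    have pw: "inner (pinv W (W (grad_z_h \<mu> \<nu> (yg k) (zg k)))) (z (Suc k) - zstar) = inner (grad_z_h \<mu> \<nu> (yg k) (zg k)) (z (Suc k) - zstar)"
      by (rule pinvW_inner[OF lin sym bR])
    have gg: "inner (grad_z_h \<mu> \<nu> (yg k) (zg k) - grad_z_h \<mu> \<nu> ystar zstar) (z (Suc k) - zstar) = inner (grad_z_h \<mu> \<nu> (yg k) (zg k)) (z (Suc k) - zstar)"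
      unfolding gzs inner_diff_left inner_minus_left xb by simp
    show ?thesis unfolding pz inner_add_left inner_scaleR_left pw gg by (simp add: algebra_simps)
  qed
  have ya: "y (Suc k) - ystar = (1/\<sigma>) *\<^sub>R (yf (Suc k) - ystar) - ((1-\<sigma>)/\<sigma>) *\<^sub>R (yf k - ystar)"
    by (rule lin_rec[OF s0 yf_upd yg_def])
  have za: "z (Suc k) - zstar = (1/\<sigma>) *\<^sub>R (zf (Suc k) - zstar) - ((1-\<sigma>)/\<sigma>) *\<^sub>R (zf k - zstar)"
    by (rule lin_rec[OF s0 zf_upd zg_def])
  have G: "2 * (inner (grad_y_h \<mu> \<nu> (yg k) (zg k) - grad_y_h \<mu> \<nu> ystar zstar) (y (Suc k) - ystar)
       + inner (grad_z_h \<mu> \<nu> (yg k) (zg k) - grad_z_h \<mu> \<nu> ystar zstar) (z (Suc k) - zstar))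
    = 2 * Qf \<mu> \<nu> (yg k - ystar) (zg k - zstar) + 2/\<sigma> * Qf \<mu> \<nu> (yf (Suc k) - ystar) (zf (Suc k) - zstar)
      - 2/\<sigma> * Qf \<mu> \<nu> ((yf (Suc k) - ystar) - (yg k - ystar)) ((zf (Suc k) - zstar) - (zg k - zstar))
      - 2*(1-\<sigma>)/\<sigma> * Qf \<mu> \<nu> (yf k - ystar) (zf k - zstar)
      + 2*(1-\<sigma>)/\<sigma> * Qf \<mu> \<nu> ((yf k - ystar) - (yg k - ystar)) ((zf k - zstar) - (zg k - zstar))"
    unfolding gy_diff gz_diff ya za by (rule G_ident[OF s0])
  have QP: "Qf \<mu> \<nu> ((yf (Suc k) - ystar) - (yg k - ystar)) ((zf (Suc k) - zstar) - (zg k - zstar))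
      = \<sigma>^2 * Qf \<mu> \<nu> (y (Suc k) - y k) (z (Suc k) - z k)"
  proof -
    have "(yf (Suc k) - ystar) - (yg k - ystar) = \<sigma> *\<^sub>R (y (Suc k) - y k)" using yf_upd[of k] by simp
    moreover have "(zf (Suc k) - zstar) - (zg k - zstar) = \<sigma> *\<^sub>R (z (Suc k) - z k)" using zf_upd[of k] by simp
    ultimately show ?thesis by (simp add: Qf_scale)
  qed
  have Dp: "Dh \<mu> \<nu> (yf (Suc k)) (zf (Suc k)) ystar zstar = Qf \<mu> \<nu> (yf (Suc k) - ystar) (zf (Suc k) - zstar)"
    by (rule Dh_eq[OF mu0])
  have Dq: "Dh \<mu> \<nu> (yf k) (zf k) ystar zstar = Qf \<mu> \<nu> (yf k - ystar) (zf k - zstar)"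
    by (rule Dh_eq[OF mu0])
  have dzR: "z (Suc k) - z k \<in> range W" using zR RS by (simp add: subspace_diff)
  have I1: "2 * \<sigma> * Qf \<mu> \<nu> (y (Suc k) - y k) (z (Suc k) - z k)
      \<le> 1 / \<theta> * (norm (y (Suc k) - y k))^2 + 1 / lam * normWdag_sq W (z (Suc k) - z k)"
  proof -
    define ny where "ny = (norm (y (Suc k) - y k))^2"
    define nz where "nz = (norm (z (Suc k) - z k))^2"
    define N where "N = normWdag_sq W (z (Suc k) - z k)"
    have N0: "0 \<le> N" unfolding N_def by (rule N_nonneg[OF lin sym psd dzR])
    have nzN: "nz \<le> lambda_max W * N" unfolding nz_def N_def by (rule lmax_N[OF lin sym psd dzR])
    have ny0: "0 \<le> ny" unfolding ny_def by simp
    have Qu: "Qf \<mu> \<nu> (y (Suc k) - y k) (z (Suc k) - z k) \<le> (2/\<mu> + \<nu>/2) * ny + 2/\<mu> * nz"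
      unfolding ny_def nz_def by (rule Qf_upper[OF muL(1)])
    have D: "0 < \<sigma> * (4 / \<mu> + \<nu>)" using sigma muL pos by (intro mult_pos_pos add_pos_pos divide_pos_pos) auto
    have th2: "\<sigma> * (4 / \<mu> + \<nu>) \<le> 1 / \<theta>"
      by (rule inv_le[OF D pos(2) th_bd])
    have la2: "4 * \<sigma> * lambda_max W / \<mu> \<le> 1 / lam"
    proof (cases "0 < 4 * \<sigma> * lambda_max W / \<mu>")
      case True
      show ?thesis by (rule inv_le[OF True pos(3) la_bd])
    next
      case False
      have "0 < 1 / lam" using pos by simp
      thus ?thesis using False by linarith
    qed
    have "2 * \<sigma> * Qf \<mu> \<nu> (y (Suc k) - y k) (z (Suc k) - z k) \<le> 2 * \<sigma> * ((2/\<mu> + \<nu>/2) * ny + 2/\<mu> * nz)"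
      using Qu sigma by simp
    also have "\<dots> = (\<sigma> * (4 / \<mu> + \<nu>)) * ny + (4 * \<sigma> / \<mu>) * nz" by (simp add: algebra_simps)
    also have "\<dots> \<le> 1 / \<theta> * ny + (4 * \<sigma> / \<mu>) * (lambda_max W * N)"
      using th2 ny0 nzN sigma muL by (intro add_mono mult_right_mono mult_left_mono) auto
    also have "(4 * \<sigma> / \<mu>) * (lambda_max W * N) = (4 * \<sigma> * lambda_max W / \<mu>) * N" by simp
    also have "1 / \<theta> * ny + (4 * \<sigma> * lambda_max W / \<mu>) * N \<le> 1 / \<theta> * ny + 1 / lam * N"
      using mult_right_mono[OF la2 N0] by linarith
    finally show ?thesis unfolding ny_def N_def .
  qed
  have I2: "\<beta> * (norm (yg k - ystar))^2 + \<gamma> * normWdag_sq W (zg k - zstar) \<le> 2 * Qf \<mu> \<nu> (yg k - ystar) (zg k - zstar)"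
  proof -
    have dR: "zg k - zstar \<in> range W" using zgR zsR RS by (simp add: subspace_diff)
    define N where "N = normWdag_sq W (zg k - zstar)"
    have N0: "0 \<le> N" unfolding N_def by (rule N_nonneg[OF lin sym psd dR])
    have lm: "lambda_min_pos W * N \<le> (norm (zg k - zstar))^2" unfolding N_def by (rule lmin_N[OF lin sym psd dR])
    have "\<gamma> * N \<le> (lambda_min_pos W * \<beta>) * N" using ga_bd N0 by (rule mult_right_mono)
    also have "\<dots> = \<beta> * (lambda_min_pos W * N)" by simp
    also have "\<dots> \<le> \<beta> * (norm (zg k - zstar))^2" using lm pos by simp
    finally have gN: "\<gamma> * N \<le> \<beta> * (norm (zg k - zstar))^2" .
    have "\<beta> * (norm (yg k - ystar))^2 + \<beta> * (norm (zg k - zstar))^2 \<le> 2 * Qf \<mu> \<nu> (yg k - ystar) (zg k - zstar)"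
      by (rule Qf_lower[OF muL(1)]) (use pos be_bd in auto)
    thus ?thesis using gN unfolding N_def by simp
  qed
  have I3a: "0 \<le> normWdag_sq W (zg k - z (Suc k))"
    by (rule N_nonneg[OF lin sym psd]) (use zgR zR RS in \<open>auto simp: subspace_diff\<close>)
  have I3b: "0 \<le> Qf \<mu> \<nu> ((yf k - ystar) - (yg k - ystar)) ((zf k - zstar) - (zg k - zstar))"
    by (rule Qf_nonneg) (use muL pos in auto)
  show ?thesis
    unfolding normM_sq_def Dp Dq
    by (rule final_comb[OF pos(2) pos(3) sigma Y1 Y2 Y3 Z1 Z2 Z3 G QP I1 I2 _ I3a I3b]) (use pos in auto)
qed


end
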